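(* With $P_\lambda$ and its concave hull $\bar P_\lambda$ as below: (a) if $0\le\lambda'<\lambda<1$ and $P_\lambda(q)<\bar P_\lambda(q)$, then $P_{\lambda'}(q)<\bar P_{\lambda'}(q)$; (b) if $1<\lambda<\lambda'$ and $P_\lambda(q)<\bar P_\lambda(q)$, then $P_{\lambda'}(q)<\bar P_{\lambda'}(q)$.
   Context: $F$ is a value distribution (support $[v_L,v_H]$ or $[v_L,\infty)$, $v_L\ge0$, atomless except possibly at $v_H$, finite mean). The value function is $v(q)=\inf\{v:F(v)>1-q\}$ for $q\in[0,1]$ (nonincreasing, nonnegative). For $\lambda\ge0$, $P_\lambda(q)=\lambda\int_0^qv(t)\,dt+(1-\lambda)\,q\,v(q)$ on $[0,1]$, and $\bar P_\lambda$ denotes the concave hull (smallest concave majorant) of $P_\lambda$ on $[0,1]$. *)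

theory Defs
  imports "HOL-Analysis.Analysis" "HOL-Probability.Probability"
begin

definition msupport :: "real measure \<Rightarrow> real set" where
  "msupport M = {x. \<forall>e>0. measure M {x - e <..< x + e} > 0}"

definition valfun :: "(real \<Rightarrow> real) \<Rightarrow> real \<Rightarrow> real" where
  "valfun F q = Inf {v. F v > 1 - q}"

definition Plam :: "(real \<Rightarrow> real) \<Rightarrow> real \<Rightarrow> real \<Rightarrow> real" where
  "Plam F l q = l * integral {0..q} (valfun F) + (1 - l) * q * valfun F q"

definition concave_hull01 :: "(real \<Rightarrow> real) \<Rightarrow> real \<Rightarrow> real" where
  "concave_hull01 g q =
     Inf {h q | h. concave_on {0..1} h \<and> (\<forall>x\<in>{0..1}. g x \<le> h x)}"

end

theory Submission imports Defs begin

lemma core: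
  fixes P P' V :: "real \<Rightarrow> real"
  assumes c: "c > 0" and e: "e \<ge> 0" and V: "concave_on {0..1} V"
    and eq: "\<And>x. x \<in> {0..1} \<Longrightarrow> P x = (P' x + e * V x) / c"
    and ne: "\<exists>h. concave_on {0..1} h \<and> (\<forall>x\<in>{0..1}. P' x \<le> h x)"
    and q: "q \<in> {0..1}"
    and nlt: "\<not> P' q < concave_hull01 P' q"
  shows "\<not> P q < concave_hull01 P q"
proof -
  let ?S' = "{h q | h. concave_on {0..1} h \<and> (\<forall>x\<in>{0..1}. P' x \<le> h x)}"
  let ?S = "{h q | h. concave_on {0..1} h \<and> (\<forall>x\<in>{0..1}. P x \<le> h x)}"
  have S'ne: "?S' \<noteq> {}" using ne by blast
  have bS: "bdd_below ?S" using q by (auto intro!: bdd_belowI[of _ "P q"])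
  have hle: "Inf ?S' \<le> P' q" using nlt by (simp add: concave_hull01_def)
  have "Inf ?S \<le> P q + d" if d: "d > 0" for d
  proof -
    have "Inf ?S' < Inf ?S' + d * c" using d c by simp
    from cInf_lessD[OF S'ne this] obtain y where "y \<in> ?S'" "y < Inf ?S' + d * c" by blast
    then obtain h where h: "concave_on {0..1} h" "\<forall>x\<in>{0..1}. P' x \<le> h x" "h q < Inf ?S' + d * c"
      by blast
    define g where "g x = (h x + e * V x) / c" for x
    have gc: "concave_on {0..1} g"
    proof -
      have "concave_on {0..1} (\<lambda>x. h x + e * V x)"
        by (intro concave_on_add h(1) concave_on_cmul e V)
      then have "concave_on {0..1} (\<lambda>x. (1/c) * (h x + e * V x))"
        using c by (intro concave_on_cmul) auto
      then show ?thesis unfolding g_def by simp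
    qed
    have gm: "\<forall>x\<in>{0..1}. P x \<le> g x"
    proof
      fix x :: real assume x: "x \<in> {0..1}"
      have "P' x + e * V x \<le> h x + e * V x" using h(2) x by simp
      then show "P x \<le> g x" unfolding g_def eq[OF x] using c by (simp add: divide_right_mono)
    qed
    have "g q \<in> ?S" using gc gm by blast
    then have "Inf ?S \<le> g q" using bS by (rule cInf_lower)
    also have "g q \<le> (P' q + d * c + e * V q) / c"
      unfolding g_def using h(3) hle c by (simp add: divide_right_mono)
    also have "\<dots> = P q + d" using eq[OF q] c by (simp add: field_simps)
    finally show ?thesis .
  qed
  then have "Inf ?S \<le> P q" by (rule field_le_epsilon)
  then show ?thesis by (simp add: concave_hull01_def)
qed

lemma F0:
  assumes "real_distribution M" "msupport M \<subseteq> {vL..}" "x < vL"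
  shows "cdf M x = 0"
proof (rule ccontr)
  interpret real_distribution M by fact
  assume "cdf M x \<noteq> 0"
  then have pos: "cdf M x > 0" using cdf_nonneg less_eq_real_def by auto
  have "eventually (\<lambda>a. cdf M a < cdf M x) at_bot" using cdf_lim_at_bot pos by (rule order_tendstoD(2))
  then obtain N where N: "\<And>a. a \<le> N \<Longrightarrow> cdf M a < cdf M x" by (auto simp: eventually_at_bot_linorder)
  define a where "a = min N (x - 1)"
  have a: "a < x" "cdf M a < cdf M x" using N[of a] by (auto simp: a_def)
  have m: "measure M {a<..x} > 0" using cdf_diff_eq[OF a(1)] a(2) by simp
  have "\<forall>z. \<exists>e>0. z \<le> x \<longrightarrow> measure M {z-e<..<z+e} = 0"
  proof
    fix z
    show "\<exists>e>0. z \<le> x \<longrightarrow> measure M {z-e<..<z+e} = 0"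
    proof (cases "z \<le> x")
      case True
      then have "z \<notin> msupport M" using assms(2,3) by auto
      then obtain e where "e > 0" "\<not> measure M {z-e<..<z+e} > 0" unfolding msupport_def by auto
      then show ?thesis using measure_nonneg[of M "{z-e<..<z+e}"] by (intro exI[of _ e]) auto
    qed (auto intro: exI[of _ 1])
  qed
  then obtain e where e: "\<And>z. e z > 0" "\<And>z. z \<le> x \<Longrightarrow> measure M {z - e z<..<z + e z} = 0"
    by metis
  have "compact {a..x}" by simp
  then obtain T where T: "T \<subseteq> {a..x}" "finite T" "{a..x} \<subseteq> (\<Union>z\<in>T. {z - e z<..<z + e z})"
  proof (rule compactE_image)
    show "{a..x} \<subseteq> (\<Union>z\<in>{a..x}. {z - e z<..<z + e z})" using e(1) by force
  qed auto
  have "measure M {a<..x} \<le> measure M (\<Union>z\<in>T. {z - e z<..<z + e z})"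
    using T by (intro finite_measure_mono) auto
  also have "\<dots> \<le> (\<Sum>z\<in>T. measure M {z - e z<..<z + e z})"
    using T by (intro finite_measure_subadditive_finite) auto
  also have "\<dots> = 0" using T e by (auto intro!: sum.neutral)
  finally show False using m by simp
qed

locale qsetup =
  fixes M :: "real measure"
  assumes rd: "real_distribution M" and int: "integrable M (\<lambda>x. x)" and z: "\<And>x. x < 0 \<Longrightarrow> cdf M x = 0"
begin

interpretation real_distribution M by (rule rd)

lemma A_ne: assumes "0 < q" shows "{w. cdf M w > 1 - q} \<noteq> {}"
proof -
  have "eventually (\<lambda>w. cdf M w > 1 - q) at_top"
    using cdf_lim_at_top_prob by (rule order_tendstoD(1)) (use assms in simp)
  then obtain N where "\<And>w. w \<ge> N \<Longrightarrow> cdf M w > 1 - q" by (auto simp: eventually_at_top_linorder)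
  then show ?thesis by blast
qed

lemma A_ge: assumes "q \<le> 1" "w \<in> {w. cdf M w > 1 - q}" shows "0 \<le> w"
proof (rule ccontr)
  assume "\<not> 0 \<le> w"
  then have "cdf M w = 0" using z by simp
  then show False using assms by simp
qed

lemma A_bdd: assumes "q \<le> 1" shows "bdd_below {w. cdf M w > 1 - q}"
  using A_ge[OF assms] by (intro bdd_belowI[of _ 0]) blast

lemma v_nonneg: assumes "0 < q" "q \<le> 1" shows "0 \<le> valfun (cdf M) q"
  unfolding valfun_def using A_ne[OF assms(1)] A_ge[OF assms(2)] by (intro cInf_greatest) auto

lemma v_anti: assumes "0 < q" "q \<le> q'" "q' \<le> 1" shows "valfun (cdf M) q' \<le> valfun (cdf M) q"
  unfolding valfun_def using A_ne[OF assms(1)] A_bdd[OF assms(3)] assms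
  by (intro cInf_superset_mono) auto

lemma v_markov: assumes "0 < q" "q \<le> 1"
  shows "q * valfun (cdf M) q \<le> integral\<^sup>L M (\<lambda>x. \<bar>x\<bar>)"
proof (rule ccontr)
  let ?K = "integral\<^sup>L M (\<lambda>x. \<bar>x\<bar>)"
  let ?v = "valfun (cdf M) q"
  assume "\<not> ?thesis"
  then have gt: "q * ?v > ?K" by simp
  have K0: "?K \<ge> 0" by simp
  have "?K / q < ?v" using gt assms by (simp add: divide_less_eq mult.commute)
  define t where "t = (?K / q + ?v) / 2"
  have t1: "?K / q < t" "t < ?v" proof -
    have "\<And>a b::real. a < b \<Longrightarrow> a < (a+b)/2 \<and> (a+b)/2 < b" by simp
    then show "?K / q < t" "t < ?v" using \<open>?K / q < ?v\<close> unfolding t_def by blast+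
  qed
  have tpos: "t > 0" using t1 K0 assms by (smt (verit) divide_nonneg_pos)
  have "t \<notin> {w. cdf M w > 1 - q}"
  proof
    assume "t \<in> {w. cdf M w > 1 - q}"
    then have "?v \<le> t" unfolding valfun_def using A_bdd[OF assms(2)] by (rule cInf_lower)
    then show False using t1 by simp
  qed
  then have Ft: "cdf M t \<le> 1 - q" by simp
  have "prob {t<..} = 1 - cdf M t"
  proof -
    have "prob (space M - {..t}) = 1 - prob {..t}" by (intro prob_compl) auto
    moreover have "space M - {..t} = {t<..}" by auto
    ultimately show ?thesis by (simp add: cdf_def)
  qed
  then have "q \<le> prob {t<..}" using Ft by simp
  also have "prob {t<..} \<le> prob {x \<in> space M. \<bar>x\<bar> \<ge> t}"
    by (intro finite_measure_mono) auto
  also have "\<dots> \<le> ?K / t"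
    using int tpos by (intro integral_Markov_inequality_measure[where A = "{}"]) auto
  finally have "q * t \<le> ?K" using tpos by (simp add: le_divide_eq)
  moreover have "?K < q * t" using t1 assms by (simp add: divide_less_eq mult.commute)
  ultimately show False by simp
qed

lemma v_int: assumes "0 < a" "b \<le> 1" shows "valfun (cdf M) integrable_on {a..b}"
proof -
  have "mono_on {a..b} (\<lambda>x. - valfun (cdf M) x)"
    using assms by (intro mono_onI) (auto intro!: v_anti)
  then have "(\<lambda>x. - valfun (cdf M) x) integrable_on {a..b}" by (rule integrable_on_mono_on)
  then show ?thesis using integrable_neg by fastforce
qed

lemma V_lower: assumes "valfun (cdf M) integrable_on {0..1}" "0 \<le> x" "x \<le> y" "y \<le> 1"
  shows "(y - x) * valfun (cdf M) y \<le> integral {x..y} (valfun (cdf M))"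
proof -
  let ?v = "valfun (cdf M)"
  define g where "g t = (if t = 0 then ?v y else ?v t)" for t
  have ig: "integral {x..y} ?v = integral {x..y} g"
    by (rule integral_spike[of "{0}"]) (auto simp: g_def)
  have iv: "?v integrable_on {x..y}"
    using assms by (intro integrable_subinterval_real[OF assms(1)]) auto
  have igg: "g integrable_on {x..y}"
    by (rule integrable_spike[OF iv, of "{0}"]) (auto simp: g_def)
  have "integral {x..y} (\<lambda>t. ?v y) \<le> integral {x..y} g"
  proof (rule integral_le[OF _ igg])
    show "(\<lambda>t. ?v y) integrable_on {x..y}" by (rule Henstock_Kurzweil_Integration.integrable_const_ivl)
    fix t assume t: "t \<in> {x..y}"
    show "?v y \<le> g t"
    proof (cases "t = 0")
      case False
      then show ?thesis using t assms by (auto simp: g_def intro!: v_anti)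
    qed (simp add: g_def)
  qed
  then show ?thesis using ig assms by (simp add: mult.commute)
qed

lemma V_upper: assumes "0 < y" "y \<le> z" "z \<le> 1"
  shows "integral {y..z} (valfun (cdf M)) \<le> (z - y) * valfun (cdf M) y"
proof -
  let ?v = "valfun (cdf M)"
  have "integral {y..z} ?v \<le> integral {y..z} (\<lambda>t. ?v y)"
  proof (rule integral_le)
    show "?v integrable_on {y..z}" using assms by (intro v_int) auto
    show "(\<lambda>t. ?v y) integrable_on {y..z}" by (rule Henstock_Kurzweil_Integration.integrable_const_ivl)
    fix t assume t: "t \<in> {y..z}"
    show "?v t \<le> ?v y" using t assms by (auto intro!: v_anti)
  qed
  then show ?thesis using assms by (simp add: mult.commute)
qed

lemma V_props:
  shows "concave_on {0..1} (\<lambda>q. integral {0..q} (valfun (cdf M)))"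
    and "\<forall>q\<in>{0..1}. 0 \<le> integral {0..q} (valfun (cdf M)) \<and>
             integral {0..q} (valfun (cdf M)) \<le> integral {0..1} (valfun (cdf M))"
proof -
  let ?v = "valfun (cdf M)"
  let ?V = "\<lambda>q. integral {0..q} ?v"
  have "concave_on {0..1} ?V \<and> (\<forall>q\<in>{0..1}. 0 \<le> ?V q \<and> ?V q \<le> ?V 1)"
  proof (cases "?v integrable_on {0..1}")
    case True
    have diff: "?V y - ?V x = integral {x..y} ?v" if "0 \<le> x" "x \<le> y" "y \<le> 1" for x y
    proof -
      have "?v integrable_on {0..y}" using that by (intro integrable_subinterval_real[OF True]) auto
      from Henstock_Kurzweil_Integration.integral_combine[OF that(1,2) this] show ?thesis by simp
    qed
    have cc: "concave_on {0..1} ?V"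
    proof (rule concave_on_linorderI)
      fix t x y :: real
      assume t: "0 < t" "t < 1" and x: "x \<in> {0..1}" and y: "y \<in> {0..1}" and xy: "x < y"
      define z where "z = (1 - t) * x + t * y"
      have zx: "z - x = t * (y - x)" and yz: "y - z = (1 - t) * (y - x)" by (simp_all add: z_def algebra_simps)
      have xz: "x < z" and zy: "z < y" proof -
        have a: "0 < t * (y - x)" using t xy by simp
        have b: "0 < (1 - t) * (y - x)" using t xy by simp
        show "x < z" using a zx by linarith
        show "z < y" using b yz by linarith
      qed
      have "0 < z" using xz x by simp
      have L: "(z - x) * ?v z \<le> ?V z - ?V x"
        using V_lower[OF True, of x z] diff[of x z] x y xz zy by simp
      have U: "?V y - ?V z \<le> (y - z) * ?v z"
        using V_upper[OF \<open>0 < z\<close>, of y] diff[of z y] x y xz zy by simp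
      have "t * (?V y - ?V z) \<le> t * ((1 - t) * (y - x) * ?v z)"
        using U yz t by (intro mult_left_mono) auto
      also have "\<dots> = (1 - t) * ((z - x) * ?v z)" using zx by simp
      also have "\<dots> \<le> (1 - t) * (?V z - ?V x)" using L t by (intro mult_left_mono) auto
      finally have "t * (?V y - ?V z) \<le> (1 - t) * (?V z - ?V x)" .
      then show "(1 - t) * ?V x + t * ?V y \<le> ?V ((1 - t) *\<^sub>R x + t *\<^sub>R y)"
      proof -
        have "(1 - t) *\<^sub>R x + t *\<^sub>R y = z" by (simp add: z_def)
        then show ?thesis using \<open>t * (?V y - ?V z) \<le> (1 - t) * (?V z - ?V x)\<close>
          by (simp add: algebra_simps)
      qed
    qed simp
    have bd: "0 \<le> ?V q \<and> ?V q \<le> ?V 1" if q: "q \<in> {0..1}" for q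
    proof
      show "0 \<le> ?V q"
      proof (cases "q = 0")
        case False
        then have "0 \<le> q * ?v q" using q v_nonneg[of q] by simp
        also have "\<dots> \<le> ?V q" using V_lower[OF True, of 0 q] q by simp
        finally show ?thesis .
      qed simp
      show "?V q \<le> ?V 1"
      proof (cases "q = 1")
        case False
        have "0 \<le> (1 - q) * ?v 1" using q v_nonneg[of 1] by simp
        also have "\<dots> \<le> ?V 1 - ?V q" using V_lower[OF True, of q 1] diff[of q 1] q by simp
        finally show ?thesis by simp
      qed simp
    qed
    show ?thesis using cc bd by blast
  next
    case False
    have z: "?V q = 0" if "q \<in> {0..1}" for q
    proof (cases "q = 0")
      case False
      have "\<not> ?v integrable_on {0..q}"
      proof
        assume "?v integrable_on {0..q}"
        moreover have "?v integrable_on {q..1}" using that False by (intro v_int) auto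
        ultimately have "?v integrable_on {0..1}" using that by (intro Henstock_Kurzweil_Integration.integrable_combine[of 0 q 1]) simp_all
        then show False using \<open>\<not> ?v integrable_on {0..1}\<close> by simp
      qed
      then show ?thesis by (simp add: not_integrable_integral)
    qed simp
    have "concave_on {0..1} ?V"
    proof (rule concave_on_linorderI)
      fix t x y :: real
      assume t: "0 < t" "t < 1" and x: "x \<in> {0..1}" and y: "y \<in> {0..1}" and xy: "x < y"
      have "(1 - t) *\<^sub>R x + t *\<^sub>R y \<in> {0..1}"
        using convexD[OF convex_real_interval(5)[of 0 1] x y, of "1-t" t] t by simp
      then show "(1 - t) * ?V x + t * ?V y \<le> ?V ((1 - t) *\<^sub>R x + t *\<^sub>R y)"
        using z[OF x] z[OF y] z by simp
    qed simp
    then show ?thesis using z by simp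
  qed
  then show "concave_on {0..1} ?V" "\<forall>q\<in>{0..1}. 0 \<le> ?V q \<and> ?V q \<le> ?V 1" by blast+
qed

end
lemma key:
  fixes M :: "real measure"
  assumes rd: "real_distribution M" and int: "integrable M (\<lambda>x. x)"
    and z: "\<And>x. x < 0 \<Longrightarrow> cdf M x = 0"
    and l: "l \<noteq> 1" and c: "(1 - l') / (1 - l) > 0" and e: "(l - l') / (1 - l) \<ge> 0"
    and q: "q \<in> {0..1}"
    and lt: "Plam (cdf M) l q < concave_hull01 (Plam (cdf M) l) q"
  shows "Plam (cdf M) l' q < concave_hull01 (Plam (cdf M) l') q"
proof (rule ccontr)
  interpret Q: qsetup M by (rule qsetup.intro[OF rd int z])
  let ?v = "valfun (cdf M)"
  let ?V = "\<lambda>q. integral {0..q} ?v"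
  let ?K = "integral\<^sup>L M (\<lambda>x. \<bar>x\<bar>)"
  assume nlt: "\<not> ?thesis"
  have R: "0 \<le> x * ?v x \<and> x * ?v x \<le> ?K" if x: "x \<in> {0..1}" for x
  proof (cases "x = 0")
    case True
    have "0 \<le> ?K" by simp
    then show ?thesis using True by simp
  next
    case False
    then show ?thesis using x Q.v_nonneg[of x] Q.v_markov[of x] by simp
  qed
  have ne: "\<exists>h. concave_on {0..1} h \<and> (\<forall>x\<in>{0..1}. Plam (cdf M) l' x \<le> h x)"
  proof (intro exI conjI ballI)
    show "concave_on {0..1} (\<lambda>_::real. \<bar>l'\<bar> * ?V 1 + \<bar>1 - l'\<bar> * ?K)" by (simp add: concave_on_const convex_real_interval)
    fix x :: real assume x: "x \<in> {0..1}"
    have a: "l' * ?V x \<le> \<bar>l'\<bar> * ?V 1"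
    proof -
      have "l' * ?V x \<le> \<bar>l'\<bar> * ?V x" using Q.V_props(2) x by (intro mult_right_mono) auto
      also have "\<dots> \<le> \<bar>l'\<bar> * ?V 1" using Q.V_props(2) x by (intro mult_left_mono) auto
      finally show ?thesis .
    qed
    have b: "(1 - l') * (x * ?v x) \<le> \<bar>1 - l'\<bar> * ?K"
    proof -
      have "(1 - l') * (x * ?v x) \<le> \<bar>1 - l'\<bar> * (x * ?v x)" using R[OF x] by (intro mult_right_mono) auto
      also have "\<dots> \<le> \<bar>1 - l'\<bar> * ?K" using R[OF x] by (intro mult_left_mono) auto
      finally show ?thesis .
    qed
    show "Plam (cdf M) l' x \<le> \<bar>l'\<bar> * ?V 1 + \<bar>1 - l'\<bar> * ?K"
      unfolding Plam_def using a b by (simp add: mult.assoc)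
  qed
  have eq: "Plam (cdf M) l x = (Plam (cdf M) l' x + (l - l') / (1 - l) * ?V x) / ((1 - l') / (1 - l))"
    if "x \<in> {0..1}" for x
  proof -
    have l1: "1 - l \<noteq> 0" using l by simp
    have l2: "1 - l' \<noteq> 0" using c by auto
    have alg: "\<And>A R. l * A + (1 - l) * R = (l' * A + (1 - l') * R + (l - l') / (1 - l) * A) / ((1 - l') / (1 - l))"
    proof -
      fix A R
      have "(l' * A + (1 - l') * R + (l - l') / (1 - l) * A) = ((1 - l') / (1 - l)) * (l * A + (1 - l) * R)"
        using l1 by (simp add: field_simps)
      then show "l * A + (1 - l) * R = (l' * A + (1 - l') * R + (l - l') / (1 - l) * A) / ((1 - l') / (1 - l))"
        using l1 l2 by simp
    qed
    show ?thesis unfolding Plam_def using alg[of "?V x" "x * ?v x"] by (simp add: mult.assoc)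
  qed
  have "\<not> Plam (cdf M) l q < concave_hull01 (Plam (cdf M) l) q"
    by (rule core[OF c e Q.V_props(1) eq ne q nlt])
  then show False using lt by simp
qed

theorem propositionB2:
  fixes M :: "real measure" and vL :: real
  assumes dist: "real_distribution M"
    and vL_nonneg: "0 \<le> vL"
    and supp: "(\<exists>vH. vL < vH \<and> msupport M = {vL..vH} \<and>
                   (\<forall>x. x \<noteq> vH \<longrightarrow> measure M {x} = 0))
             \<or> (msupport M = {vL..} \<and> (\<forall>x. measure M {x} = 0))"
    and mean: "integrable M (\<lambda>x. x)"
  shows "(\<forall>l' l q. 0 \<le> l' \<and> l' < l \<and> l < 1 \<and> q \<in> {0..1} \<and>
            Plam (cdf M) l q < concave_hull01 (Plam (cdf M) l) q \<longrightarrow>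
            Plam (cdf M) l' q < concave_hull01 (Plam (cdf M) l') q)
       \<and> (\<forall>l l' q. 1 < l \<and> l < l' \<and> q \<in> {0..1} \<and>
            Plam (cdf M) l q < concave_hull01 (Plam (cdf M) l) q \<longrightarrow>
            Plam (cdf M) l' q < concave_hull01 (Plam (cdf M) l') q)"
proof -
  have ss: "msupport M \<subseteq> {vL..}" using supp by auto
  have z: "\<And>x. x < 0 \<Longrightarrow> cdf M x = 0" using F0[OF dist ss] vL_nonneg by simp
  show ?thesis
  proof (intro conjI allI impI)
    fix l' l q :: real
    assume h: "0 \<le> l' \<and> l' < l \<and> l < 1 \<and> q \<in> {0..1} \<and>
            Plam (cdf M) l q < concave_hull01 (Plam (cdf M) l) q"
    show "Plam (cdf M) l' q < concave_hull01 (Plam (cdf M) l') q"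
      by (rule key[OF dist mean z, where l=l and l'=l' and q=q]) (use h in \<open>auto simp: divide_simps\<close>)
  next
    fix l l' q :: real
    assume h: "1 < l \<and> l < l' \<and> q \<in> {0..1} \<and>
            Plam (cdf M) l q < concave_hull01 (Plam (cdf M) l) q"
    show "Plam (cdf M) l' q < concave_hull01 (Plam (cdf M) l') q"
      by (rule key[OF dist mean z, where l=l and l'=l' and q=q]) (use h in \<open>auto simp: divide_simps\<close>)
  qed
qed

end
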